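(* Let $\mathcal D$ be a clone $\tau$-algebra. (1) If $\mathcal D$ is minimal, then $(\mathcal D^\downarrow)^\uparrow\cong\mathcal D$. (2) For every congruence $\phi$ of the clone $\tau$-algebra $\mathcal T_\tau$ of $\tau$-terms, $((\mathcal T_\tau/\phi)^\downarrow)^\uparrow\cong\mathcal T_\tau/\phi$. (3) For every t-algebra $\mathbf A$ of type $\tau$, $((\mathbf A^\uparrow)^\downarrow)^\uparrow\cong\mathbf A^\uparrow$.
   Context: $\mathbb N=\{1,2,\dots\}$. A thread on $A$ is $s\in A^{\mathbb N}$; $r[a_1,\dots,a_n]$ is the thread with entries $a_i$ for $i\le n$ and $r_i$ for $i>n$; $r\equiv_{\mathbb N}s$ iff they differ in finitely many places, $[s]_{\mathbb N}$ the class. A trace on $A$ is a nonempty union of $\equiv_{\mathbb N}$-classes. A t-algebra of type $\tau$ and trace $\mathsf a$ is $(A,\mathsf a,\sigma^{\mathbf A})_{\sigma\in\tau}$ with $\sigma^{\mathbf A}:\mathsf a\to A$ arbitrary. Clone $\tau$-algebras: algebras $(C,q_n,\mathsf e_i,\sigma)_{n\ge0,i\ge1,\sigma\in\tau}$ (constants $\mathsf e_i,\sigma$; $q_n$ of arity $n+1$) satisfying (C1) $q_n(\mathsf e_i,\bar x)=x_i$ ($i\le n$); (C2) $q_n(\mathsf e_j,\bar x)=\mathsf e_j$ ($j>n$); (C3) $q_n(x,\mathsf e_1,\dots,\mathsf e_n)=x$; (C4) $q_n(x,\bar y)=q_k(x,\bar y,\mathsf e_{n+1},\dots,\mathsf e_k)$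 ($k>n$); (C5) $q_n(q_n(x,\bar y),\bar z)=q_n(x,q_n(y_1,\bar z),\dots,q_n(y_n,\bar z))$. A clone $\tau$-algebra is minimal if it is generated by its constants $\mathsf e_i$ ($i\ge1$) and $\sigma$ ($\sigma\in\tau$). $\mathcal T_\tau$ denotes the initial clone $\tau$-algebra, whose elements are the $\tau$-terms (least set containing $\mathsf e_1,\mathsf e_2,\dots$ and $\sigma(t_1,\dots,t_n,\mathsf e_{n+1},\mathsf e_{n+2},\dots)$ for $\sigma\in\tau$, $n\ge0$), with $q_n(t,t_1,\dots,t_n)$ the simultaneous substitution of $t_i$ for $\mathsf e_i$ ($i\le n$) in $t$. For a clone $\tau$-algebra $\mathcal C$: $\epsilon^{\mathcal C}=(\mathsf e_1^{\mathcal C},\mathsf e_2^{\mathcal C},\dots)$, $\pmb\epsilon=[\epsilon^{\mathcal C}]_{\mathbb N}$, and for $c\in C$, $\varphi_c:\pmb\epsilon\to C$, $\varphi_c(\epsilon^{\mathcal C}[s_1,\dots,s_n])=q_n^{\mathcal C}(c,s_1,\dots,s_n)$. The t-algebra under $\mathcal C$ is $\mathcal C^\downarrow=(C,\pmb\epsilon,\varphi_{\sigma^{\mathcal C}})_{\sigma\in\tau}$. For a t-algebra $\mathbf A$ of trace $\mathsf a$, the full functional clone $\tau$-algebra has universe all maps $\mathsf a\to A$, $\mathsf e_i(s)=s_i$, $q_n(\varphi,\psi_1,\dots,\psi_n)(s)=\varphi(s[\psi_1(s),\dots,\psi_n(s)])$, $\sigma\mapsto\sigma^{\mathbf A}$;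 the term clone algebra $\mathbf A^\uparrow$ is its minimal subalgebra (the one generated by the constants). *)

theory Defs
  imports Main "HOL-Library.FuncSet"
begin

(* Conventions: indices are 0-based.  The paper's e_i (i >= 1) is  ce D (i-1),
   the paper's thread entry s_i (i >= 1) is  s (i-1).
   q_n(x, y_1,...,y_n) is  cq D x [y_1,...,y_n]  (n = length of the list). *)

record ('c, 't) clone_alg =
  ccarrier :: "'c set"
  cq :: "'c \<Rightarrow> 'c list \<Rightarrow> 'c"
  ce :: "nat \<Rightarrow> 'c"
  cop :: "'t \<Rightarrow> 'c"

definition clone_algebra :: "('c, 't, 'z) clone_alg_scheme \<Rightarrow> bool" where
  "clone_algebra D \<longleftrightarrow>
     (\<forall>i. ce D i \<in> ccarrier D) \<and>
     (\<forall>\<sigma>. cop D \<sigma> \<in> ccarrier D) \<and>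
     (\<forall>x ys. x \<in> ccarrier D \<longrightarrow> set ys \<subseteq> ccarrier D \<longrightarrow> cq D x ys \<in> ccarrier D) \<and>
     \<comment> \<open>(C1)\<close>
     (\<forall>ys i. set ys \<subseteq> ccarrier D \<longrightarrow> i < length ys \<longrightarrow> cq D (ce D i) ys = ys ! i) \<and>
     \<comment> \<open>(C2)\<close>
     (\<forall>ys j. set ys \<subseteq> ccarrier D \<longrightarrow> length ys \<le> j \<longrightarrow> cq D (ce D j) ys = ce D j) \<and>
     \<comment> \<open>(C3)\<close>
     (\<forall>x n. x \<in> ccarrier D \<longrightarrow> cq D x (map (ce D) [0..<n]) = x) \<and>
     \<comment> \<open>(C4)\<close>
     (\<forall>x ys k. x \<in> ccarrier D \<longrightarrow> set ys \<subseteq> ccarrier D \<longrightarrow> length ys < k \<longrightarrow>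
        cq D x ys = cq D x (ys @ map (ce D) [length ys..<k])) \<and>
     \<comment> \<open>(C5)\<close>
     (\<forall>x ys zs. x \<in> ccarrier D \<longrightarrow> set ys \<subseteq> ccarrier D \<longrightarrow> set zs \<subseteq> ccarrier D \<longrightarrow>
        length ys = length zs \<longrightarrow>
        cq D (cq D x ys) zs = cq D x (map (\<lambda>y. cq D y zs) ys))"

inductive_set clone_gen :: "('c, 't, 'z) clone_alg_scheme \<Rightarrow> 'c set" for D where
  gen_e: "ce D i \<in> clone_gen D"
| gen_op: "cop D \<sigma> \<in> clone_gen D"
| gen_q: "x \<in> clone_gen D \<Longrightarrow> (\<And>y. y \<in> set ys \<Longrightarrow> y \<in> clone_gen D) \<Longrightarrow> cq D x ys \<in> clone_gen D"

definition minimal_clone :: "('c, 't, 'z) clone_alg_scheme \<Rightarrow> bool" where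
  "minimal_clone D \<longleftrightarrow> ccarrier D = clone_gen D"

definition clone_iso :: "('c, 't, 'z) clone_alg_scheme \<Rightarrow> ('d, 't, 'w) clone_alg_scheme \<Rightarrow> ('c \<Rightarrow> 'd) \<Rightarrow> bool" where
  "clone_iso D E f \<longleftrightarrow>
     bij_betw f (ccarrier D) (ccarrier E) \<and>
     (\<forall>x ys. x \<in> ccarrier D \<longrightarrow> set ys \<subseteq> ccarrier D \<longrightarrow> f (cq D x ys) = cq E (f x) (map f ys)) \<and>
     (\<forall>i. f (ce D i) = ce E i) \<and>
     (\<forall>\<sigma>. f (cop D \<sigma>) = cop E \<sigma>)"

definition clone_isomorphic :: "('c, 't, 'z) clone_alg_scheme \<Rightarrow> ('d, 't, 'w) clone_alg_scheme \<Rightarrow> bool" where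
  "clone_isomorphic D E \<longleftrightarrow> (\<exists>f. clone_iso D E f)"

definition clone_congruence :: "('c, 't, 'z) clone_alg_scheme \<Rightarrow> ('c \<times> 'c) set \<Rightarrow> bool" where
  "clone_congruence D \<phi> \<longleftrightarrow>
     equiv (ccarrier D) \<phi> \<and>
     (\<forall>x x' ys ys'. (x, x') \<in> \<phi> \<longrightarrow> list_all2 (\<lambda>y y'. (y, y') \<in> \<phi>) ys ys' \<longrightarrow>
        (cq D x ys, cq D x' ys') \<in> \<phi>)"

definition clone_quot :: "('c, 't, 'z) clone_alg_scheme \<Rightarrow> ('c \<times> 'c) set \<Rightarrow> ('c set, 't) clone_alg" where
  "clone_quot D \<phi> =
     \<lparr> ccarrier = ccarrier D // \<phi>,
       cq = (\<lambda>X Ys. \<phi> `` {cq D (SOME x. x \<in> X) (map (\<lambda>Y. SOME y. y \<in> Y) Ys)}),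
       ce = (\<lambda>i. \<phi> `` {ce D i}),
       cop = (\<lambda>\<sigma>. \<phi> `` {cop D \<sigma>}) \<rparr>"

text \<open>Op sigma [t_1,...,t_n] stands for sigma(t_1,...,t_n,e_{n+1},e_{n+2},...).
  Terms are kept in normal form: no trailing argument t_n equal to e_n.\<close>
datatype 't trm = Var nat | Op 't "'t trm list"

definition trim_args :: "'t trm list \<Rightarrow> 't trm list" where
  "trim_args xs = take (LEAST k. \<forall>j. k \<le> j \<and> j < length xs \<longrightarrow> xs ! j = Var j) xs"

fun tnorm :: "'t trm \<Rightarrow> 't trm" where
  "tnorm (Var i) = Var i"
| "tnorm (Op \<sigma> us) = Op \<sigma> (trim_args (map tnorm us))"

fun tsubst :: "'t trm list \<Rightarrow> 't trm \<Rightarrow> 't trm" where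
  "tsubst ts (Var i) = (if i < length ts then ts ! i else Var i)"
| "tsubst ts (Op \<sigma> us) =
     Op \<sigma> (map (tsubst ts) us @ map (\<lambda>j. ts ! j) [length us..<length ts])"

definition term_clone :: "('t trm, 't) clone_alg" where
  "term_clone = \<lparr> ccarrier = {t. tnorm t = t},
                  cq = (\<lambda>t ts. tnorm (tsubst ts t)),
                  ce = Var,
                  cop = (\<lambda>\<sigma>. Op \<sigma> []) \<rparr>"

record ('a, 't) talg =
  tcarrier :: "'a set"
  ttrace :: "(nat \<Rightarrow> 'a) set"
  top :: "'t \<Rightarrow> (nat \<Rightarrow> 'a) \<Rightarrow> 'a"

definition thread_eq :: "(nat \<Rightarrow> 'a) \<Rightarrow> (nat \<Rightarrow> 'a) \<Rightarrow> bool" where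
  "thread_eq r s \<longleftrightarrow> finite {i. r i \<noteq> s i}"

definition thread_upd :: "(nat \<Rightarrow> 'a) \<Rightarrow> 'a list \<Rightarrow> nat \<Rightarrow> 'a" where
  "thread_upd r as = (\<lambda>i. if i < length as then as ! i else r i)"

definition is_trace :: "'a set \<Rightarrow> (nat \<Rightarrow> 'a) set \<Rightarrow> bool" where
  "is_trace A T \<longleftrightarrow> T \<noteq> {} \<and> T \<subseteq> (UNIV \<rightarrow> A) \<and>
     (\<forall>r \<in> T. \<forall>s \<in> UNIV \<rightarrow> A. thread_eq r s \<longrightarrow> s \<in> T)"

definition t_algebra :: "('a, 't, 'z) talg_scheme \<Rightarrow> bool" where
  "t_algebra A \<longleftrightarrow> is_trace (tcarrier A) (ttrace A) \<and>
     (\<forall>\<sigma>. \<forall>s \<in> ttrace A. top A \<sigma> s \<in> tcarrier A)"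

definition full_fclone :: "('a, 't, 'z) talg_scheme \<Rightarrow> ((nat \<Rightarrow> 'a) \<Rightarrow> 'a, 't) clone_alg" where
  "full_fclone A =
     \<lparr> ccarrier = ttrace A \<rightarrow>\<^sub>E tcarrier A,
       cq = (\<lambda>\<phi> \<psi>s. \<lambda>s \<in> ttrace A. \<phi> (thread_upd s (map (\<lambda>\<psi>. \<psi> s) \<psi>s))),
       ce = (\<lambda>i. \<lambda>s \<in> ttrace A. s i),
       cop = (\<lambda>\<sigma>. restrict (top A \<sigma>) (ttrace A)) \<rparr>"

definition up :: "('a, 't, 'z) talg_scheme \<Rightarrow> ((nat \<Rightarrow> 'a) \<Rightarrow> 'a, 't) clone_alg" where
  "up A = (full_fclone A) \<lparr> ccarrier := clone_gen (full_fclone A) \<rparr>"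

definition eps_class :: "('c, 't, 'z) clone_alg_scheme \<Rightarrow> (nat \<Rightarrow> 'c) set" where
  "eps_class D = {s \<in> UNIV \<rightarrow> ccarrier D. thread_eq (ce D) s}"

text \<open>phi_c(eps[s_1,...,s_n]) = q_n(c,s_1,...,s_n); well defined by (C4).\<close>
definition phi :: "('c, 't, 'z) clone_alg_scheme \<Rightarrow> 'c \<Rightarrow> (nat \<Rightarrow> 'c) \<Rightarrow> 'c" where
  "phi D c s = cq D c (map s [0..<(LEAST n. \<forall>i\<ge>n. s i = ce D i)])"

definition down :: "('c, 't, 'z) clone_alg_scheme \<Rightarrow> ('c, 't) talg" where
  "down D = \<lparr> tcarrier = ccarrier D, ttrace = eps_class D,
              top = (\<lambda>\<sigma>. phi D (cop D \<sigma>)) \<rparr>"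

end

theory Submission
  imports Defs
begin

lemma ca_e: "clone_algebra D \<Longrightarrow> ce D i \<in> ccarrier D" by (simp add: clone_algebra_def)
lemma ca_op: "clone_algebra D \<Longrightarrow> cop D \<sigma> \<in> ccarrier D" by (simp add: clone_algebra_def)
lemma ca_q: "clone_algebra D \<Longrightarrow> x \<in> ccarrier D \<Longrightarrow> set ys \<subseteq> ccarrier D \<Longrightarrow> cq D x ys \<in> ccarrier D"
  by (simp add: clone_algebra_def)
lemma ca_C1: "clone_algebra D \<Longrightarrow> set ys \<subseteq> ccarrier D \<Longrightarrow> i < length ys \<Longrightarrow> cq D (ce D i) ys = ys ! i"
  by (simp add: clone_algebra_def)
lemma ca_C2: "clone_algebra D \<Longrightarrow> set ys \<subseteq> ccarrier D \<Longrightarrow> length ys \<le> j \<Longrightarrow> cq D (ce D j) ys = ce D j"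
  by (simp add: clone_algebra_def)
lemma ca_C3: "clone_algebra D \<Longrightarrow> x \<in> ccarrier D \<Longrightarrow> cq D x (map (ce D) [0..<n]) = x"
  by (simp add: clone_algebra_def)
lemma ca_C4: "clone_algebra D \<Longrightarrow> x \<in> ccarrier D \<Longrightarrow> set ys \<subseteq> ccarrier D \<Longrightarrow> length ys < k \<Longrightarrow>
   cq D x ys = cq D x (ys @ map (ce D) [length ys..<k])"
  unfolding clone_algebra_def by blast
lemma ca_C5: "clone_algebra D \<Longrightarrow> x \<in> ccarrier D \<Longrightarrow> set ys \<subseteq> ccarrier D \<Longrightarrow> set zs \<subseteq> ccarrier D \<Longrightarrow>
        length ys = length zs \<Longrightarrow>
        cq D (cq D x ys) zs = cq D x (map (\<lambda>y. cq D y zs) ys)"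
  unfolding clone_algebra_def by blast

lemma clone_gen_sub: assumes "clone_algebra D" shows "clone_gen D \<subseteq> ccarrier D"
proof
  fix x assume "x \<in> clone_gen D" then show "x \<in> ccarrier D"
    by induction (auto intro!: ca_e ca_op ca_q assms)
qed

lemma clone_gen_eq_aux:
  assumes "cq D = cq E" "ce D = ce E" "cop D = cop E" and "x \<in> clone_gen D"
  shows "x \<in> clone_gen E"
  using assms(4)
proof induction
  case (gen_e i) then show ?case using assms(2) clone_gen.gen_e by metis
next
  case (gen_op \<sigma>) then show ?case using assms(3) clone_gen.gen_op by metis
next
  case (gen_q x ys) then show ?case using assms(1) clone_gen.gen_q by metis
qed

lemma clone_gen_eq:
  assumes "cq D = cq E" "ce D = ce E" "cop D = cop E"
  shows "clone_gen D = clone_gen E"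
  using clone_gen_eq_aux[OF assms] clone_gen_eq_aux[OF assms[symmetric]] by blast

lemma upd_nth1: "i < length vs \<Longrightarrow> thread_upd s vs i = vs ! i" by (simp add: thread_upd_def)
lemma upd_nth2: "length vs \<le> i \<Longrightarrow> thread_upd s vs i = s i" by (simp add: thread_upd_def)

lemma upd_map_self: "thread_upd s (map s [0..<n]) = s"
  by (auto simp: thread_upd_def)

lemma upd_append_self: "thread_upd s (vs @ map s [length vs..<k]) = thread_upd s vs"
  by (auto simp: thread_upd_def nth_append)

lemma upd_upd: "length ws = length vs \<Longrightarrow> thread_upd (thread_upd s vs) ws = thread_upd s ws"
  by (auto simp: thread_upd_def)

lemma upd_finite: "finite {i. s i \<noteq> thread_upd s vs i}"
proof -
  have "{i. s i \<noteq> thread_upd s vs i} \<subseteq> {..<length vs}" by (auto simp: thread_upd_def split: if_splits)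
  then show ?thesis using finite_subset by blast
qed

lemma down_simps: "tcarrier (down D) = ccarrier D" "ttrace (down D) = eps_class D"
   "top (down D) \<sigma> = phi D (cop D \<sigma>)"
  by (simp_all add: down_def)

lemma up_simps: "ccarrier (up A) = clone_gen (full_fclone A)" "cq (up A) = cq (full_fclone A)"
   "ce (up A) = ce (full_fclone A)" "cop (up A) = cop (full_fclone A)"
  by (simp_all add: up_def)

lemma ff_simps: "ccarrier (full_fclone A) = ttrace A \<rightarrow>\<^sub>E tcarrier A"
  "cq (full_fclone A) F Gs = (\<lambda>s\<in>ttrace A. F (thread_upd s (map (\<lambda>\<psi>. \<psi> s) Gs)))"
  "ce (full_fclone A) i = (\<lambda>s\<in>ttrace A. s i)"
  "cop (full_fclone A) \<sigma> = restrict (top A \<sigma>) (ttrace A)"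
  by (simp_all add: full_fclone_def)

section \<open>The eps class\<close>

lemma eps_bound: assumes "s \<in> eps_class D" shows "\<exists>K. \<forall>i\<ge>K. s i = ce D i"
proof -
  have "finite {i. ce D i \<noteq> s i}" using assms by (simp add: eps_class_def thread_eq_def)
  from finite_nat_set_iff_bounded[THEN iffD1, OF this]
  obtain K where K: "\<forall>i\<in>{i. ce D i \<noteq> s i}. i < K" by blast
  show ?thesis
  proof (intro exI allI impI)
    fix i assume "K \<le> i"
    then show "s i = ce D i" using K by (cases "ce D i = s i") auto
  qed
qed

lemma eps_car: "s \<in> eps_class D \<Longrightarrow> s i \<in> ccarrier D" by (auto simp: eps_class_def)

lemma eps_map_car: "s \<in> eps_class D \<Longrightarrow> set (map s xs) \<subseteq> ccarrier D" by (auto simp: eps_class_def)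

lemma eps_ce: "clone_algebra D \<Longrightarrow> ce D \<in> eps_class D"
  by (auto simp: eps_class_def thread_eq_def ca_e)

lemma upd_eps:
  assumes s: "s \<in> eps_class D" and vs: "set vs \<subseteq> ccarrier D"
  shows "thread_upd s vs \<in> eps_class D"
proof -
  have "{i. ce D i \<noteq> thread_upd s vs i} \<subseteq> {i. ce D i \<noteq> s i} \<union> {i. s i \<noteq> thread_upd s vs i}" by auto
  moreover have "finite {i. ce D i \<noteq> s i}" using s by (simp add: eps_class_def thread_eq_def)
  ultimately have "finite {i. ce D i \<noteq> thread_upd s vs i}" using upd_finite finite_subset by blast
  moreover have "thread_upd s vs \<in> UNIV \<rightarrow> ccarrier D"
  proof
    fix i
    show "thread_upd s vs i \<in> ccarrier D"
    proof (cases "i < length vs")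
      case True then show ?thesis using vs nth_mem by (force simp: thread_upd_def)
    next
      case False then show ?thesis using eps_car[OF s] by (simp add: thread_upd_def)
    qed
  qed
  ultimately show ?thesis by (simp add: eps_class_def thread_eq_def)
qed

lemma phi_K:
  assumes D: "clone_algebra D" and c: "c \<in> ccarrier D" and s: "s \<in> eps_class D"
   and K: "\<forall>i\<ge>K. s i = ce D i"
  shows "phi D c s = cq D c (map s [0..<K])"
proof -
  define n where "n = (LEAST n. \<forall>i\<ge>n. s i = ce D i)"
  have P: "\<forall>i\<ge>n. s i = ce D i" unfolding n_def using K by (rule LeastI)
  have nK: "n \<le> K" unfolding n_def using K by (rule Least_le)
  have sc: "set (map s [0..<n]) \<subseteq> ccarrier D" using s by (rule eps_map_car)
  show ?thesis
  proof (cases "n = K")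
    case True then show ?thesis by (simp add: phi_def n_def[symmetric])
  next
    case False
    then have "n < K" using nK by simp
    have "cq D c (map s [0..<n]) = cq D c (map s [0..<n] @ map (ce D) [n..<K])"
      using ca_C4[OF D c sc, of K] \<open>n<K\<close> by simp
    also have "map (ce D) [n..<K] = map s [n..<K]" using P by auto
    also have "map s [0..<n] @ map s [n..<K] = map s [0..<K]" using nK
      by (metis map_append le0 upt_add_eq_append add_diff_inverse_nat not_le)
    finally show ?thesis by (simp add: phi_def n_def[symmetric])
  qed
qed

lemma phi_eps: "clone_algebra D \<Longrightarrow> c \<in> ccarrier D \<Longrightarrow> phi D c (ce D) = c"
  unfolding phi_def by (rule ca_C3)

lemma phi_car: assumes D: "clone_algebra D" and c: "c \<in> ccarrier D" and s: "s \<in> eps_class D"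
  shows "phi D c s \<in> ccarrier D"
  unfolding phi_def by (rule ca_q[OF D c eps_map_car[OF s]])

lemma phi_ce: assumes D: "clone_algebra D" and s: "s \<in> eps_class D"
  shows "phi D (ce D i) s = s i"
proof -
  obtain K0 where K0: "\<forall>i\<ge>K0. s i = ce D i" using eps_bound[OF s] by blast
  define K where "K = max K0 (Suc i)"
  have K: "\<forall>i\<ge>K. s i = ce D i" using K0 by (simp add: K_def)
  have "phi D (ce D i) s = cq D (ce D i) (map s [0..<K])" by (rule phi_K[OF D ca_e[OF D] s K])
  also have "\<dots> = s i" using ca_C1[OF D eps_map_car[OF s, of "[0..<K]"], of i] by (simp add: K_def)
  finally show ?thesis .
qed

lemma phi_q:
  assumes D: "clone_algebra D" and c: "c \<in> ccarrier D" and ds: "set ds \<subseteq> ccarrier D"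
    and s: "s \<in> eps_class D"
  shows "phi D c (thread_upd s (map (\<lambda>d. phi D d s) ds)) = phi D (cq D c ds) s"
proof -
  obtain K0 where K0: "\<forall>i\<ge>K0. s i = ce D i" using eps_bound[OF s] by blast
  define K where "K = Suc (max K0 (length ds))"
  have K: "\<forall>i\<ge>K. s i = ce D i" using K0 by (simp add: K_def)
  have mK: "length ds < K" by (simp add: K_def)
  define zs where "zs = map s [0..<K]"
  have zs: "set zs \<subseteq> ccarrier D" unfolding zs_def by (rule eps_map_car[OF s])
  have phid: "\<And>d. d \<in> set ds \<Longrightarrow> phi D d s = cq D d zs"
    using phi_K[OF D _ s K] ds unfolding zs_def by auto
  define t where "t = thread_upd s (map (\<lambda>d. phi D d s) ds)"
  have vs: "set (map (\<lambda>d. phi D d s) ds) \<subseteq> ccarrier D" using phi_car[OF D _ s] ds by auto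
  have t: "t \<in> eps_class D" unfolding t_def by (rule upd_eps[OF s vs])
  have tK: "\<forall>i\<ge>K. t i = ce D i" using K mK by (simp add: t_def thread_upd_def)
  define ds' where "ds' = ds @ map (ce D) [length ds..<K]"
  have ds': "set ds' \<subseteq> ccarrier D" using ds ca_e[OF D] by (auto simp: ds'_def)
  have lds': "length ds' = length zs" using mK by (simp add: ds'_def zs_def)
  have "phi D c t = cq D c (map t [0..<K])" by (rule phi_K[OF D c t tK])
  also have "map t [0..<K] = map (\<lambda>y. cq D y zs) ds'"
  proof (rule nth_equalityI)
    show "length (map t [0..<K]) = length (map (\<lambda>y. cq D y zs) ds')" using lds' by (simp add: zs_def)
  next
    fix i assume "i < length (map t [0..<K])"
    then have i: "i < K" by simp
    show "map t [0..<K] ! i = map (\<lambda>y. cq D y zs) ds' ! i"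
    proof (cases "i < length ds")
      case True
      then show ?thesis using i phid[of "ds ! i"] by (simp add: t_def thread_upd_def ds'_def nth_append)
    next
      case False
      then have "ds' ! i = ce D i" using i by (simp add: ds'_def nth_append)
      moreover have "cq D (ce D i) zs = s i" using ca_C1[OF D zs, of i] i by (simp add: zs_def)
      ultimately show ?thesis using i False lds' by (simp add: t_def thread_upd_def zs_def)
    qed
  qed
  also have "cq D c (map (\<lambda>y. cq D y zs) ds') = cq D (cq D c ds') zs"
    by (rule ca_C5[OF D c ds' zs lds', symmetric])
  also have "cq D c ds' = cq D c ds" unfolding ds'_def by (rule ca_C4[OF D c ds mK, symmetric])
  also have "cq D (cq D c ds) zs = phi D (cq D c ds) s"
    unfolding zs_def by (rule phi_K[OF D ca_q[OF D c ds] s K, symmetric])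
  finally show ?thesis unfolding t_def .
qed


section \<open>Theorem for minimal clone algebras\<close>

lemma inv_gen:
  assumes D: "clone_algebra D" and F: "F \<in> clone_gen (full_fclone (down D))"
  shows "F (ce D) \<in> ccarrier D \<and> F = restrict (phi D (F (ce D))) (eps_class D)"
  using F
proof induction
  case (gen_e i)
  have "ce (full_fclone (down D)) i = (\<lambda>s\<in>eps_class D. s i)" by (simp add: ff_simps down_simps)
  moreover have "(\<lambda>s\<in>eps_class D. s i) = restrict (phi D (ce D i)) (eps_class D)"
    using phi_ce[OF D] by (auto simp: restrict_def)
  ultimately show ?case using eps_ce[OF D] ca_e[OF D] phi_eps[OF D ca_e[OF D]] by simp
next
  case (gen_op \<sigma>)
  have "cop (full_fclone (down D)) \<sigma> = restrict (phi D (cop D \<sigma>)) (eps_class D)"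
    by (simp add: ff_simps down_simps)
  then show ?case using eps_ce[OF D] ca_op[OF D] phi_eps[OF D ca_op[OF D]] by simp
next
  case (gen_q F Gs)
  define c where "c = F (ce D)"
  define ds where "ds = map (\<lambda>G. G (ce D)) Gs"
  have IHF: "F (ce D) \<in> ccarrier D \<and> F = restrict (phi D (F (ce D))) (eps_class D)" using gen_q by blast
  have IHG: "\<And>G. G \<in> set Gs \<Longrightarrow> G (ce D) \<in> ccarrier D \<and> G = restrict (phi D (G (ce D))) (eps_class D)"
    using gen_q by blast
  have c: "c \<in> ccarrier D" and Fe: "F = restrict (phi D c) (eps_class D)" using IHF by (auto simp: c_def)
  have ds: "set ds \<subseteq> ccarrier D" using IHG by (auto simp: ds_def)
  have Ge: "\<And>G. G \<in> set Gs \<Longrightarrow> G = restrict (phi D (G (ce D))) (eps_class D)" using IHG by blast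
  define H where "H = cq (full_fclone (down D)) F Gs"
  have Hs: "H s = phi D (cq D c ds) s" if s: "s \<in> eps_class D" for s
  proof -
    have m: "map (\<lambda>\<psi>. \<psi> s) Gs = map (\<lambda>d. phi D d s) ds"
      unfolding ds_def map_map comp_def
    proof (rule map_cong[OF refl])
      fix G assume G: "G \<in> set Gs"
      have "G s = restrict (phi D (G (ce D))) (eps_class D) s" using Ge[OF G] by (rule fun_cong)
      then show "G s = phi D (G (ce D)) s" using s by simp
    qed
    have vs: "set (map (\<lambda>d. phi D d s) ds) \<subseteq> ccarrier D" using phi_car[OF D _ s] ds by auto
    have "H s = F (thread_upd s (map (\<lambda>d. phi D d s) ds))"
      using s by (simp add: H_def ff_simps down_simps m)
    also have "\<dots> = phi D c (thread_upd s (map (\<lambda>d. phi D d s) ds))"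
      using Fe upd_eps[OF s vs] by simp
    also have "\<dots> = phi D (cq D c ds) s" by (rule phi_q[OF D c ds s])
    finally show ?thesis .
  qed
  have Hn: "H s = undefined" if "s \<notin> eps_class D" for s
    using that by (simp add: H_def ff_simps down_simps)
  have cq: "cq D c ds \<in> ccarrier D" by (rule ca_q[OF D c ds])
  have He: "H (ce D) = cq D c ds" using Hs[OF eps_ce[OF D]] phi_eps[OF D cq] by simp
  have "H = restrict (phi D (H (ce D))) (eps_class D)"
    using Hs Hn He by (auto simp: restrict_def)
  then show ?case using He cq by (simp add: H_def)
qed

theorem min_iso:
  fixes D :: "('c, 't) clone_alg"
  assumes D: "clone_algebra D" and M: "minimal_clone D"
  shows "clone_isomorphic (up (down D)) D"
proof -
  define G where "G = clone_gen (full_fclone (down D))"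
  define f where "f = (\<lambda>F::(nat \<Rightarrow> 'c) \<Rightarrow> 'c. F (ce D))"
  have inv: "\<And>F. F \<in> G \<Longrightarrow> f F \<in> ccarrier D \<and> F = restrict (phi D (f F)) (eps_class D)"
    unfolding G_def f_def by (rule inv_gen[OF D])
  have hom: "f (cq (up (down D)) F Gs) = cq D (f F) (map f Gs)" if F: "F \<in> G" and Gs: "set Gs \<subseteq> G" for F Gs
  proof -
    define c where "c = f F"
    define ds where "ds = map f Gs"
    have c: "c \<in> ccarrier D" using inv[OF F] c_def by simp
    have Fe: "F = restrict (phi D c) (eps_class D)" using inv[OF F] c_def by simp
    have ds: "set ds \<subseteq> ccarrier D" using inv Gs by (auto simp: ds_def)
    have m: "map (\<lambda>\<psi>. \<psi> (ce D)) Gs = map (\<lambda>d. phi D d (ce D)) ds"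
      unfolding ds_def using phi_eps[OF D] inv Gs by (auto simp: f_def)
    have vs: "set (map (\<lambda>d. phi D d (ce D)) ds) \<subseteq> ccarrier D" using phi_car[OF D _ eps_ce[OF D]] ds by auto
    have "f (cq (up (down D)) F Gs) = F (thread_upd (ce D) (map (\<lambda>d. phi D d (ce D)) ds))"
      using eps_ce[OF D] by (simp add: f_def up_simps ff_simps down_simps m)
    also have "\<dots> = phi D c (thread_upd (ce D) (map (\<lambda>d. phi D d (ce D)) ds))"
      using Fe upd_eps[OF eps_ce[OF D] vs] by simp
    also have "\<dots> = phi D (cq D c ds) (ce D)" by (rule phi_q[OF D c ds eps_ce[OF D]])
    also have "\<dots> = cq D c ds" by (rule phi_eps[OF D ca_q[OF D c ds]])
    finally show ?thesis by (simp add: c_def ds_def)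
  qed
  have fe: "f (ce (up (down D)) i) = ce D i" for i
    using eps_ce[OF D] by (simp add: f_def up_simps ff_simps down_simps)
  have fo: "f (cop (up (down D)) \<sigma>) = cop D \<sigma>" for \<sigma>
    using eps_ce[OF D] phi_eps[OF D ca_op[OF D]] by (simp add: f_def up_simps ff_simps down_simps)
  have injf: "inj_on f G"
  proof (rule inj_onI)
    fix F F' assume "F \<in> G" "F' \<in> G" "f F = f F'"
    note a = this
    have "F = restrict (phi D (f F)) (eps_class D)" using inv[OF a(1)] by blast
    also have "\<dots> = restrict (phi D (f F')) (eps_class D)" by (simp only: a(3))
    also have "\<dots> = F'" using inv[OF a(2)] by simp
    finally show "F = F'" .
  qed
  have sub: "f ` G \<subseteq> ccarrier D" using inv by auto
  have sup: "x \<in> f ` G" if "x \<in> clone_gen D" for x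
    using that
  proof induction
    case (gen_e i)
    have "ce (up (down D)) i \<in> G" unfolding G_def up_simps by (rule clone_gen.gen_e)
    then show ?case by (rule rev_image_eqI) (simp add: fe)
  next
    case (gen_op \<sigma>)
    have "cop (up (down D)) \<sigma> \<in> G" unfolding G_def up_simps by (rule clone_gen.gen_op)
    then show ?case by (rule rev_image_eqI) (simp add: fo)
  next
    case (gen_q x ys)
    have xG: "x \<in> f ` G" and ysG: "\<forall>y\<in>set ys. y \<in> f ` G" using gen_q by blast+
    obtain F where F: "F \<in> G" "x = f F" using xG by blast
    define Gs where "Gs = map (inv_into G f) ys"
    have Gs: "set Gs \<subseteq> G" using ysG by (auto simp: Gs_def intro: inv_into_into)
    have ys: "map f Gs = ys" unfolding Gs_def map_map
    proof (rule map_idI)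
      fix y assume "y \<in> set ys"
      then have "y \<in> f ` G" using ysG by blast
      then show "(f \<circ> inv_into G f) y = y" by (simp add: f_inv_into_f)
    qed
    have "cq (up (down D)) F Gs \<in> G" unfolding G_def up_simps
      apply (rule clone_gen.gen_q)
      using F Gs by (auto simp: G_def)
    then show ?case by (rule rev_image_eqI) (use hom[OF F(1) Gs] F(2) ys in simp)
  qed
  have bij: "bij_betw f G (ccarrier D)"
    unfolding bij_betw_def using injf sub sup M by (auto simp: minimal_clone_def)
  have "clone_iso (up (down D)) D f"
    unfolding clone_iso_def using bij hom fe fo by (auto simp: up_simps G_def)
  then show ?thesis unfolding clone_isomorphic_def by blast
qed


section \<open>Quotients\<close>

lemma cong_equiv: "clone_congruence D \<phi> \<Longrightarrow> equiv (ccarrier D) \<phi>"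
  by (simp add: clone_congruence_def)

lemma quot_simps: "ccarrier (clone_quot D \<phi>) = ccarrier D // \<phi>"
  "ce (clone_quot D \<phi>) i = \<phi> `` {ce D i}"
  "cop (clone_quot D \<phi>) \<sigma> = \<phi> `` {cop D \<sigma>}"
  "cq (clone_quot D \<phi>) X Ys = \<phi> `` {cq D (SOME x. x \<in> X) (map (\<lambda>Y. SOME y. y \<in> Y) Ys)}"
  by (simp_all add: clone_quot_def)

lemma rep_props:
  assumes E: "equiv A \<phi>" and X: "X \<in> A // \<phi>"
  shows "(SOME x. x \<in> X) \<in> A \<and> X = \<phi> `` {SOME x. x \<in> X}"
proof -
  obtain a where a: "a \<in> A" "X = \<phi> `` {a}" using X by (rule quotientE)
  have "a \<in> X" unfolding a(2) by (rule equiv_class_self[OF E a(1)])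
  then have r: "(SOME x. x \<in> X) \<in> X" by (rule someI)
  then have ar: "(a, SOME x. x \<in> X) \<in> \<phi>" using a(2) by blast
  then have "(SOME x. x \<in> X) \<in> A" using equiv_type[OF E] by blast
  moreover have "X = \<phi> `` {SOME x. x \<in> X}"
  proof -
    have "X = \<phi> `` {a}" by (rule a(2))
    also have "\<dots> = \<phi> `` {SOME x. x \<in> X}" by (rule equiv_class_eq[OF E ar])
    finally show ?thesis .
  qed
  ultimately show ?thesis by blast
qed

lemma rep_rel:
  assumes E: "equiv A \<phi>" and a: "a \<in> A"
  shows "((SOME x. x \<in> \<phi> `` {a}), a) \<in> \<phi>"
proof -
  have "a \<in> \<phi> `` {a}" by (rule equiv_class_self[OF E a])
  then have "(SOME x. x \<in> \<phi> `` {a}) \<in> \<phi> `` {a}" by (rule someI)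
  then have "(a, SOME x. x \<in> \<phi> `` {a}) \<in> \<phi>" by blast
  moreover have "sym \<phi>" using E by (simp add: equiv_def)
  ultimately show ?thesis by (blast dest: symD)
qed

lemma quot_q:
  assumes C: "clone_congruence D \<phi>" and x: "x \<in> ccarrier D" and ys: "set ys \<subseteq> ccarrier D"
  shows "cq (clone_quot D \<phi>) (\<phi> `` {x}) (map (\<lambda>y. \<phi> `` {y}) ys) = \<phi> `` {cq D x ys}"
proof -
  have E: "equiv (ccarrier D) \<phi>" using C by (rule cong_equiv)
  have r1: "((SOME a. a \<in> \<phi> `` {x}), x) \<in> \<phi>" by (rule rep_rel[OF E x])
  have r2: "list_all2 (\<lambda>y y'. (y, y') \<in> \<phi>) (map (\<lambda>Y. SOME y. y \<in> Y) (map (\<lambda>y. \<phi> `` {y}) ys)) ys"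
    unfolding list_all2_conv_all_nth
  proof (intro conjI allI impI)
    fix i assume "i < length (map (\<lambda>Y. SOME y. y \<in> Y) (map (\<lambda>y. \<phi> `` {y}) ys))"
    then have i: "i < length ys" by simp
    then have "ys ! i \<in> ccarrier D" using ys nth_mem by blast
    then show "(map (\<lambda>Y. SOME y. y \<in> Y) (map (\<lambda>y. \<phi> `` {y}) ys) ! i, ys ! i) \<in> \<phi>"
      using rep_rel[OF E, of "ys ! i"] i by simp
  qed simp
  have "(cq D (SOME a. a \<in> \<phi> `` {x}) (map (\<lambda>Y. SOME y. y \<in> Y) (map (\<lambda>y. \<phi> `` {y}) ys)), cq D x ys) \<in> \<phi>"
    using C r1 r2 unfolding clone_congruence_def by blast
  then show ?thesis by (simp add: quot_simps equiv_class_eq[OF E])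
qed

lemma quot_list:
  assumes E: "equiv A \<phi>" and Ys: "set Ys \<subseteq> A // \<phi>"
  shows "\<exists>ys. set ys \<subseteq> A \<and> Ys = map (\<lambda>y. \<phi> `` {y}) ys"
proof (intro exI conjI)
  show "set (map (\<lambda>Y. SOME y. y \<in> Y) Ys) \<subseteq> A" using Ys rep_props[OF E] by auto
  show "Ys = map (\<lambda>y. \<phi> `` {y}) (map (\<lambda>Y. SOME y. y \<in> Y) Ys)"
    unfolding map_map comp_def by (rule map_idI[symmetric]) (use Ys rep_props[OF E] in auto)
qed

lemma quot_ca:
  assumes D: "clone_algebra D" and C: "clone_congruence D \<phi>"
  shows "clone_algebra (clone_quot D \<phi>)"
proof -
  have E: "equiv (ccarrier D) \<phi>" using C by (rule cong_equiv)
  let ?c = "\<lambda>y. \<phi> `` {y}"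
  let ?Q = "clone_quot D \<phi>"
  have cl: "?c y \<in> ccarrier ?Q" if "y \<in> ccarrier D" for y
    using that by (simp add: quot_simps quotientI)
  have X: "\<exists>x\<in>ccarrier D. X = ?c x" if "X \<in> ccarrier ?Q" for X
    using that by (auto simp: quot_simps elim!: quotientE)
  have L: "\<exists>ys. set ys \<subseteq> ccarrier D \<and> Ys = map ?c ys" if "set Ys \<subseteq> ccarrier ?Q" for Ys
    using quot_list[OF E] that by (simp add: quot_simps)
  have mce: "map (ce ?Q) xs = map ?c (map (ce D) xs)" for xs by (simp add: quot_simps)
  show ?thesis unfolding clone_algebra_def
  proof (intro conjI allI impI)
    fix i show "ce ?Q i \<in> ccarrier ?Q" using cl ca_e[OF D] by (simp add: quot_simps)
  next
    fix \<sigma> show "cop ?Q \<sigma> \<in> ccarrier ?Q" using cl ca_op[OF D] by (simp add: quot_simps)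
  next
    fix X Ys assume h: "X \<in> ccarrier ?Q" "set Ys \<subseteq> ccarrier ?Q"
    obtain x where x: "x \<in> ccarrier D" "X = ?c x" using X h(1) by blast
    obtain ys where ys: "set ys \<subseteq> ccarrier D" "Ys = map ?c ys" using L h(2) by blast
    show "cq ?Q X Ys \<in> ccarrier ?Q" using quot_q[OF C x(1) ys(1)] cl[OF ca_q[OF D x(1) ys(1)]] x ys by simp
  next
    fix Ys i assume h: "set Ys \<subseteq> ccarrier ?Q" "i < length Ys"
    obtain ys where ys: "set ys \<subseteq> ccarrier D" "Ys = map ?c ys" using L h(1) by blast
    have i: "i < length ys" using h(2) ys by simp
    show "cq ?Q (ce ?Q i) Ys = Ys ! i"
      using quot_q[OF C ca_e[OF D] ys(1)] ca_C1[OF D ys(1) i] ys i by (simp add: quot_simps)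
  next
    fix Ys j assume h: "set Ys \<subseteq> ccarrier ?Q" "length Ys \<le> j"
    obtain ys where ys: "set ys \<subseteq> ccarrier D" "Ys = map ?c ys" using L h(1) by blast
    have j: "length ys \<le> j" using h(2) ys by simp
    show "cq ?Q (ce ?Q j) Ys = ce ?Q j"
      using quot_q[OF C ca_e[OF D] ys(1)] ca_C2[OF D ys(1) j] ys by (simp add: quot_simps)
  next
    fix X n assume "X \<in> ccarrier ?Q"
    then obtain x where x: "x \<in> ccarrier D" "X = ?c x" using X by blast
    have s: "set (map (ce D) [0..<n]) \<subseteq> ccarrier D" using ca_e[OF D] by auto
    show "cq ?Q X (map (ce ?Q) [0..<n]) = X"
      unfolding mce using quot_q[OF C x(1) s] ca_C3[OF D x(1)] x by simp
  next
    fix X Ys k assume h: "X \<in> ccarrier ?Q" "set Ys \<subseteq> ccarrier ?Q" "length Ys < k"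
    obtain x where x: "x \<in> ccarrier D" "X = ?c x" using X h(1) by blast
    obtain ys where ys: "set ys \<subseteq> ccarrier D" "Ys = map ?c ys" using L h(2) by blast
    have k: "length ys < k" using h(3) ys by simp
    have s: "set (ys @ map (ce D) [length ys..<k]) \<subseteq> ccarrier D" using ca_e[OF D] ys by auto
    have "cq ?Q X Ys = ?c (cq D x ys)" using quot_q[OF C x(1) ys(1)] x ys by simp
    also have "\<dots> = ?c (cq D x (ys @ map (ce D) [length ys..<k]))" using ca_C4[OF D x(1) ys(1) k] by simp
    also have "\<dots> = cq ?Q X (map ?c (ys @ map (ce D) [length ys..<k]))" using quot_q[OF C x(1) s] x by simp
    also have "map ?c (ys @ map (ce D) [length ys..<k]) = Ys @ map (ce ?Q) [length Ys..<k]"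
      using ys by (simp add: mce)
    finally show "cq ?Q X Ys = cq ?Q X (Ys @ map (ce ?Q) [length Ys..<k])" .
  next
    fix X Ys Zs assume "X \<in> ccarrier ?Q" "set Ys \<subseteq> ccarrier ?Q" "set Zs \<subseteq> ccarrier ?Q" "length Ys = length Zs"
    note h = this
    obtain x where x: "x \<in> ccarrier D" "X = ?c x" using X h(1) by blast
    obtain ys where ys: "set ys \<subseteq> ccarrier D" "Ys = map ?c ys" using L h(2) by blast
    obtain zs where zs: "set zs \<subseteq> ccarrier D" "Zs = map ?c zs" using L h(3) by blast
    have l: "length ys = length zs" using h(4) ys zs by simp
    have q1: "set (map (\<lambda>y. cq D y zs) ys) \<subseteq> ccarrier D" using ca_q[OF D _ zs(1)] ys by auto
    have m: "map ?c (map (\<lambda>y. cq D y zs) ys) = map (\<lambda>Y. cq ?Q Y Zs) Ys"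
      using ys zs quot_q[OF C _ zs(1)] by auto
    have "cq ?Q (cq ?Q X Ys) Zs = cq ?Q (?c (cq D x ys)) (map ?c zs)"
      using quot_q[OF C x(1) ys(1)] x ys zs by simp
    also have "\<dots> = ?c (cq D (cq D x ys) zs)" by (rule quot_q[OF C ca_q[OF D x(1) ys(1)] zs(1)])
    also have "\<dots> = ?c (cq D x (map (\<lambda>y. cq D y zs) ys))" using ca_C5[OF D x(1) ys(1) zs(1) l] by simp
    also have "\<dots> = cq ?Q X (map ?c (map (\<lambda>y. cq D y zs) ys))" using quot_q[OF C x(1) q1] x(2) by simp
    also have "\<dots> = cq ?Q X (map (\<lambda>Y. cq ?Q Y Zs) Ys)" by (simp only: m)
    finally show "cq ?Q (cq ?Q X Ys) Zs = cq ?Q X (map (\<lambda>Y. cq ?Q Y Zs) Ys)" .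
  qed
qed

lemma quot_min:
  assumes D: "clone_algebra D" and C: "clone_congruence D \<phi>" and M: "minimal_clone D"
  shows "minimal_clone (clone_quot D \<phi>)"
proof -
  let ?Q = "clone_quot D \<phi>"
  have g: "\<phi> `` {x} \<in> clone_gen ?Q" if "x \<in> clone_gen D" for x
    using that
  proof induction
    case (gen_e i) then show ?case using clone_gen.gen_e[of ?Q i] by (simp add: quot_simps)
  next
    case (gen_op \<sigma>) then show ?case using clone_gen.gen_op[of ?Q \<sigma>] by (simp add: quot_simps)
  next
    case (gen_q x ys)
    have xc: "x \<in> ccarrier D" and ysc: "set ys \<subseteq> ccarrier D" using gen_q clone_gen_sub[OF D] by blast+
    have "cq ?Q (\<phi> `` {x}) (map (\<lambda>y. \<phi> `` {y}) ys) \<in> clone_gen ?Q"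
      by (rule clone_gen.gen_q) (use gen_q in auto)
    then show ?case using quot_q[OF C xc ysc] by simp
  qed
  have "ccarrier ?Q \<subseteq> clone_gen ?Q"
  proof
    fix X assume "X \<in> ccarrier ?Q"
    then obtain x where "x \<in> ccarrier D" "X = \<phi> `` {x}" by (auto simp: quot_simps elim!: quotientE)
    then show "X \<in> clone_gen ?Q" using g M by (simp add: minimal_clone_def)
  qed
  moreover have "clone_gen ?Q \<subseteq> ccarrier ?Q" by (rule clone_gen_sub[OF quot_ca[OF D C]])
  ultimately show ?thesis by (simp add: minimal_clone_def)
qed


section \<open>Term clone algebras of t-algebras\<close>

lemma upd_T:
  assumes A: "t_algebra A" and s: "s \<in> ttrace A" and vs: "set vs \<subseteq> tcarrier A"
  shows "thread_upd s vs \<in> ttrace A"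
proof -
  have tr: "is_trace (tcarrier A) (ttrace A)" using A by (simp add: t_algebra_def)
  have sC: "s \<in> UNIV \<rightarrow> tcarrier A" using tr s by (auto simp: is_trace_def)
  have "thread_upd s vs \<in> UNIV \<rightarrow> tcarrier A"
  proof
    fix i
    show "thread_upd s vs i \<in> tcarrier A"
    proof (cases "i < length vs")
      case True then show ?thesis using vs nth_mem by (force simp: thread_upd_def)
    next
      case False then show ?thesis using sC by (auto simp: thread_upd_def)
    qed
  qed
  moreover have "thread_eq s (thread_upd s vs)" unfolding thread_eq_def by (rule upd_finite)
  ultimately show ?thesis using tr s unfolding is_trace_def by blast
qed

lemma ff_ext:
  assumes A: "t_algebra A" and F: "F \<in> clone_gen (full_fclone A)"
  shows "F \<in> ttrace A \<rightarrow>\<^sub>E tcarrier A"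
  using F
proof induction
  case (gen_e i)
  have "s i \<in> tcarrier A" if "s \<in> ttrace A" for s
    using A that by (auto simp: t_algebra_def is_trace_def)
  then show ?case by (auto simp: ff_simps)
next
  case (gen_op \<sigma>)
  then show ?case using A by (auto simp: ff_simps t_algebra_def)
next
  case (gen_q F Gs)
  have Fx: "F \<in> ttrace A \<rightarrow>\<^sub>E tcarrier A" and Gx: "\<And>G. G \<in> set Gs \<Longrightarrow> G \<in> ttrace A \<rightarrow>\<^sub>E tcarrier A"
    using gen_q by blast+
  have "F (thread_upd s (map (\<lambda>\<psi>. \<psi> s) Gs)) \<in> tcarrier A" if s: "s \<in> ttrace A" for s
  proof -
    have "set (map (\<lambda>\<psi>. \<psi> s) Gs) \<subseteq> tcarrier A" using Gx s by auto
    then have "thread_upd s (map (\<lambda>\<psi>. \<psi> s) Gs) \<in> ttrace A" by (rule upd_T[OF A s])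
    then show ?thesis using Fx by auto
  qed
  then show ?case by (auto simp: ff_simps)
qed

lemma up_ca:
  assumes A: "t_algebra A"
  shows "clone_algebra (up A)"
proof -
  let ?G = "clone_gen (full_fclone A)"
  let ?T = "ttrace A"
  have ext: "\<And>F. F \<in> ?G \<Longrightarrow> F \<in> ?T \<rightarrow>\<^sub>E tcarrier A" by (rule ff_ext[OF A])
  have vals: "set (map (\<lambda>\<psi>. \<psi> s) Gs) \<subseteq> tcarrier A" if "set Gs \<subseteq> ?G" "s \<in> ?T" for Gs s
    using that ext by auto
  have updT: "thread_upd s (map (\<lambda>\<psi>. \<psi> s) Gs) \<in> ?T" if "set Gs \<subseteq> ?G" "s \<in> ?T" for Gs s
    by (rule upd_T[OF A that(2) vals[OF that]])
  have out: "F s = undefined" if "F \<in> ?G" "s \<notin> ?T" for F s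
    using ext[OF that(1)] that(2) by auto
  have mce: "map (\<lambda>\<psi>. \<psi> s) (map (ce (full_fclone A)) xs) = map s xs" if "s \<in> ?T" for s xs
    using that by (simp add: ff_simps)
  show ?thesis unfolding clone_algebra_def up_simps
  proof (intro conjI allI impI)
    fix i show "ce (full_fclone A) i \<in> ?G" by (rule clone_gen.gen_e)
  next
    fix \<sigma> show "cop (full_fclone A) \<sigma> \<in> ?G" by (rule clone_gen.gen_op)
  next
    fix x ys assume "x \<in> ?G" "set ys \<subseteq> ?G"
    then show "cq (full_fclone A) x ys \<in> ?G" by (intro clone_gen.gen_q) auto
  next
    fix ys i assume ys: "set ys \<subseteq> ?G" and i: "i < length ys"
    show "cq (full_fclone A) (ce (full_fclone A) i) ys = ys ! i"
    proof
      fix s show "cq (full_fclone A) (ce (full_fclone A) i) ys s = (ys ! i) s"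
      proof (cases "s \<in> ?T")
        case True then show ?thesis using updT[OF ys True] i by (simp add: ff_simps thread_upd_def)
      next
        case False then show ?thesis using out[of "ys ! i" s] ys i nth_mem by (force simp: ff_simps)
      qed
    qed
  next
    fix ys j assume ys: "set ys \<subseteq> ?G" and j: "length ys \<le> j"
    show "cq (full_fclone A) (ce (full_fclone A) j) ys = ce (full_fclone A) j"
    proof
      fix s show "cq (full_fclone A) (ce (full_fclone A) j) ys s = ce (full_fclone A) j s"
        using updT[OF ys] j by (simp add: ff_simps thread_upd_def)
    qed
  next
    fix x n assume x: "x \<in> ?G"
    show "cq (full_fclone A) x (map (ce (full_fclone A)) [0..<n]) = x"
    proof
      fix s show "cq (full_fclone A) x (map (ce (full_fclone A)) [0..<n]) s = x s"
      proof (cases "s \<in> ?T")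
        case True then show ?thesis by (simp add: ff_simps mce upd_map_self del: map_map)
      next
        case False then show ?thesis using out[OF x False] by (simp add: ff_simps)
      qed
    qed
  next
    fix x ys k assume x: "x \<in> ?G" and ys: "set ys \<subseteq> ?G" and k: "length ys < k"
    show "cq (full_fclone A) x ys = cq (full_fclone A) x (ys @ map (ce (full_fclone A)) [length ys..<k])"
    proof
      fix s show "cq (full_fclone A) x ys s = cq (full_fclone A) x (ys @ map (ce (full_fclone A)) [length ys..<k]) s"
      proof (cases "s \<in> ?T")
        case True
        have "map (\<lambda>\<psi>. \<psi> s) (ys @ map (ce (full_fclone A)) [length ys..<k])
              = map (\<lambda>\<psi>. \<psi> s) ys @ map s [length (map (\<lambda>\<psi>. \<psi> s) ys)..<k]"
          using True by (simp add: ff_simps)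
        then show ?thesis using True by (simp only: ff_simps restrict_apply' upd_append_self)
      next
        case False then show ?thesis by (simp add: ff_simps)
      qed
    qed
  next
    fix x ys zs assume x: "x \<in> ?G" and ys: "set ys \<subseteq> ?G" and zs: "set zs \<subseteq> ?G" and l: "length ys = length zs"
    show "cq (full_fclone A) (cq (full_fclone A) x ys) zs = cq (full_fclone A) x (map (\<lambda>y. cq (full_fclone A) y zs) ys)"
    proof
      fix s show "cq (full_fclone A) (cq (full_fclone A) x ys) zs s = cq (full_fclone A) x (map (\<lambda>y. cq (full_fclone A) y zs) ys) s"
      proof (cases "s \<in> ?T")
        case True
        define t where "t = thread_upd s (map (\<lambda>\<psi>. \<psi> s) zs)"
        have t: "t \<in> ?T" unfolding t_def by (rule updT[OF zs True])
        have "cq (full_fclone A) (cq (full_fclone A) x ys) zs s = x (thread_upd t (map (\<lambda>\<psi>. \<psi> t) ys))"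
          using True t by (simp add: ff_simps t_def)
        also have "thread_upd t (map (\<lambda>\<psi>. \<psi> t) ys) = thread_upd s (map (\<lambda>\<psi>. \<psi> t) ys)"
          unfolding t_def by (rule upd_upd) (simp add: l)
        also have "map (\<lambda>\<psi>. \<psi> t) ys = map (\<lambda>\<psi>. \<psi> s) (map (\<lambda>y. cq (full_fclone A) y zs) ys)"
          using True by (simp add: ff_simps t_def)
        also have "x (thread_upd s \<dots>) = cq (full_fclone A) x (map (\<lambda>y. cq (full_fclone A) y zs) ys) s"
          using True by (simp add: ff_simps)
        finally show ?thesis .
      next
        case False then show ?thesis by (simp add: ff_simps)
      qed
    qed
  qed
qed

lemma up_min: "minimal_clone (up A)"
proof -
  have "clone_gen (up A) = clone_gen (full_fclone A)" by (rule clone_gen_eq) (simp_all add: up_simps)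
  then show ?thesis by (simp add: minimal_clone_def up_simps)
qed


section \<open>Terms\<close>

definition vext :: "'t trm list \<Rightarrow> nat \<Rightarrow> 't trm" where
  "vext xs j = (if j < length xs then xs ! j else Var j)"

lemma trim_args_vext:
  "trim_args xs = map (vext xs) [0..<(LEAST k. \<forall>j\<ge>k. vext xs j = Var j)]"
proof -
  let ?P = "\<lambda>k. \<forall>j. k \<le> j \<and> j < length xs \<longrightarrow> xs ! j = Var j"
  let ?Q = "\<lambda>k. \<forall>j\<ge>k. vext xs j = Var j"
  define n where "n = (LEAST k. ?Q k)"
  have Ql: "?Q (length xs)" by (simp add: vext_def)
  have Qn: "?Q n" unfolding n_def using Ql by (rule LeastI)
  have nl: "n \<le> length xs" unfolding n_def using Ql by (rule Least_le)
  have Pn: "?P n" using Qn by (auto simp: vext_def)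
  define p where "p = (LEAST k. ?P k)"
  have pn: "p \<le> n" unfolding p_def using Pn by (rule Least_le)
  have Pp: "?P p" unfolding p_def using Pn by (rule LeastI)
  have Qp: "?Q p" using Pp by (auto simp: vext_def)
  have np: "n \<le> p" unfolding n_def using Qp by (rule Least_le)
  have "trim_args xs = take p xs" by (simp add: trim_args_def p_def)
  also have "p = n" using pn np by simp
  also have "take n xs = map (vext xs) [0..<n]"
    by (rule nth_equalityI) (use nl in \<open>auto simp: vext_def\<close>)
  finally show ?thesis by (simp add: n_def)
qed

lemma trim_cong: "vext xs = vext ys \<Longrightarrow> trim_args xs = trim_args ys"
  by (simp add: trim_args_vext)

lemma vext_trim: "vext (trim_args xs) j = vext xs j"
proof -
  define n where "n = (LEAST k. \<forall>j\<ge>k. vext xs j = Var j)"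
  have Qn: "\<forall>j\<ge>n. vext xs j = Var j" unfolding n_def
    by (rule LeastI[of _ "length xs"]) (simp add: vext_def)
  have "trim_args xs = map (vext xs) [0..<n]" unfolding n_def by (rule trim_args_vext)
  then show ?thesis using Qn by (cases "j < n") (auto simp: vext_def)
qed

lemma vext_map_tnorm: "vext (map tnorm xs) j = tnorm (vext xs j)"
  by (simp add: vext_def)

lemma tnorm_Op_cong:
  assumes "\<And>j. tnorm (vext xs j) = tnorm (vext ys j)"
  shows "tnorm (Op \<sigma> xs) = tnorm (Op \<sigma> ys)"
proof -
  have h: "vext (map tnorm xs) = vext (map tnorm ys)" by (rule ext) (simp add: vext_map_tnorm assms)
  show ?thesis using trim_cong[OF h] by simp
qed

lemma vext_sargs:
  "vext (map (tsubst ts) us @ map (\<lambda>j. ts ! j) [length us..<length ts]) j = tsubst ts (vext us j)"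
  by (auto simp: vext_def nth_append)

lemma tnorm_idem: "tnorm (tnorm t) = tnorm t"
proof (induction t)
  case (Var i) then show ?case by simp
next
  case (Op \<sigma> us)
  have h: "vext (map tnorm (trim_args (map tnorm us))) = vext (map tnorm us)"
  proof
    fix j
    have "vext (map tnorm (trim_args (map tnorm us))) j = tnorm (vext (map tnorm us) j)"
      by (simp only: vext_map_tnorm vext_trim)
    also have "\<dots> = tnorm (tnorm (vext us j))" by (simp only: vext_map_tnorm)
    also have "\<dots> = tnorm (vext us j)"
    proof (cases "j < length us")
      case True then show ?thesis using Op.IH[of "us ! j"] by (simp add: vext_def)
    next
      case False then show ?thesis by (simp add: vext_def)
    qed
    also have "\<dots> = vext (map tnorm us) j" by (simp only: vext_map_tnorm)
    finally show "vext (map tnorm (trim_args (map tnorm us))) j = vext (map tnorm us) j" .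
  qed
  show ?case using trim_cong[OF h] by simp
qed

lemma tsubst_cong:
  assumes "\<And>i. tnorm (tsubst ts' (Var i)) = tnorm (tsubst ts (Var i))"
  shows "tnorm (tsubst ts' t) = tnorm (tsubst ts t)"
proof (induction t)
  case (Var i) show ?case by (rule assms)
next
  case (Op \<sigma> us)
  have j: "tnorm (tsubst ts' (vext us j)) = tnorm (tsubst ts (vext us j))" for j
  proof (cases "j < length us")
    case True then show ?thesis using Op.IH[of "us ! j"] by (simp add: vext_def)
  next
    case False then show ?thesis using assms[of j] by (simp add: vext_def)
  qed
  show ?case unfolding tsubst.simps(2)
    by (rule tnorm_Op_cong) (simp only: vext_sargs j)
qed

lemma tsubst_tnorm: "tnorm (tsubst zs (tnorm t)) = tnorm (tsubst zs t)"
proof (induction t)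
  case (Var i) show ?case by simp
next
  case (Op \<sigma> us)
  have j: "tnorm (tsubst zs (vext (trim_args (map tnorm us)) j)) = tnorm (tsubst zs (vext us j))" for j
  proof -
    have v: "vext (trim_args (map tnorm us)) j = tnorm (vext us j)" by (simp only: vext_trim vext_map_tnorm)
    show ?thesis
    proof (cases "j < length us")
      case True then show ?thesis using Op.IH[of "us ! j"] v by (simp add: vext_def)
    next
      case False then show ?thesis using v by (simp add: vext_def)
    qed
  qed
  have e: "tnorm (Op \<sigma> us) = Op \<sigma> (trim_args (map tnorm us))" by simp
  show ?case unfolding e tsubst.simps(2)
    by (rule tnorm_Op_cong) (simp only: vext_sargs j)
qed

lemma tsubst_comp:
  assumes l: "length ys = length zs"
  shows "tsubst zs (tsubst ys x) = tsubst (map (tsubst zs) ys) x"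
proof (induction x)
  case (Var i) then show ?case using l by auto
next
  case (Op \<sigma> us)
  have 1: "map (tsubst zs) (map (tsubst ys) us) = map (tsubst (map (tsubst zs) ys)) us"
    unfolding map_map by (rule map_cong[OF refl]) (simp add: Op.IH)
  have 2: "map (tsubst zs) (map (\<lambda>j. ys ! j) [length us..<length ys])
          = map (\<lambda>j. map (tsubst zs) ys ! j) [length us..<length (map (tsubst zs) ys)]"
    by (rule nth_equalityI) auto
  have 3: "[length (map (tsubst ys) us @ map (\<lambda>j. ys ! j) [length us..<length ys])..<length zs] = []"
    using l by simp
  show ?case by (simp only: tsubst.simps(2) map_append 1 2 3) simp
qed

lemma tsubst_nil: "tsubst [] x = x"
  by (induction x) (auto intro: map_idI)

lemma term_clone_ca: "clone_algebra term_clone"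
  unfolding clone_algebra_def
proof (intro conjI allI impI)
  fix i show "ce term_clone i \<in> ccarrier term_clone" by (simp add: term_clone_def)
next
  fix \<sigma> :: 'a show "cop term_clone \<sigma> \<in> ccarrier term_clone" by (simp add: term_clone_def trim_args_def)
next
  fix x ys show "cq term_clone x ys \<in> ccarrier term_clone" by (simp add: term_clone_def tnorm_idem)
next
  fix ys :: "'a trm list" and i assume "set ys \<subseteq> ccarrier term_clone" "i < length ys"
  then show "cq term_clone (ce term_clone i) ys = ys ! i" using nth_mem by (force simp: term_clone_def)
next
  fix ys :: "'a trm list" and j assume "length ys \<le> j"
  then show "cq term_clone (ce term_clone j) ys = ce term_clone j" by (simp add: term_clone_def)
next
  fix x :: "'a trm" and n assume x: "x \<in> ccarrier term_clone"
  have "tnorm (tsubst (map Var [0..<n]) x) = tnorm (tsubst [] x)"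
    by (rule tsubst_cong) simp
  then show "cq term_clone x (map (ce term_clone) [0..<n]) = x" using x by (simp add: term_clone_def tsubst_nil)
next
  fix x :: "'a trm" and ys k
  have "tnorm (tsubst ys x) = tnorm (tsubst (ys @ map Var [length ys..<k]) x)"
    by (rule tsubst_cong) (auto simp: nth_append)
  then show "cq term_clone x ys = cq term_clone x (ys @ map (ce term_clone) [length ys..<k])"
    by (simp add: term_clone_def)
next
  fix x :: "'a trm" and ys zs :: "'a trm list" assume l: "length ys = length zs"
  have "tnorm (tsubst zs (tnorm (tsubst ys x))) = tnorm (tsubst zs (tsubst ys x))" by (rule tsubst_tnorm)
  also have "\<dots> = tnorm (tsubst (map (tsubst zs) ys) x)" by (simp only: tsubst_comp[OF l])
  also have "\<dots> = tnorm (tsubst (map (\<lambda>y. tnorm (tsubst zs y)) ys) x)"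
    by (rule tsubst_cong) (simp add: tnorm_idem)
  finally show "cq term_clone (cq term_clone x ys) zs = cq term_clone x (map (\<lambda>y. cq term_clone y zs) ys)"
    by (simp add: term_clone_def)
qed

lemma term_clone_min: "minimal_clone term_clone"
proof -
  have "tnorm t = t \<longrightarrow> t \<in> clone_gen term_clone" for t :: "'a trm"
  proof (induction t)
    case (Var i)
    show ?case using clone_gen.gen_e[of term_clone i] by (simp add: term_clone_def)
  next
    case (Op \<sigma> us)
    show ?case
    proof
      assume n: "tnorm (Op \<sigma> us) = Op \<sigma> us"
      then have tu: "trim_args (map tnorm us) = us" by simp
      then obtain k where "take k (map tnorm us) = us" unfolding trim_args_def by blast
      then have "map tnorm us = us"
        by (metis length_map length_take min.absorb_iff2 take_all_iff order_refl nle_le)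
      then have un: "\<And>u. u \<in> set us \<Longrightarrow> tnorm u = u" by (metis map_eq_conv map_ident)
      have g: "\<And>u. u \<in> set us \<Longrightarrow> u \<in> clone_gen term_clone" using Op.IH un by blast
      have "cq term_clone (cop term_clone \<sigma>) us \<in> clone_gen term_clone"
        by (rule clone_gen.gen_q[OF clone_gen.gen_op]) (rule g)
      moreover have "cq term_clone (cop term_clone \<sigma>) us = Op \<sigma> us"
        by (simp add: term_clone_def map_nth tu)
      ultimately show "Op \<sigma> us \<in> clone_gen term_clone" by simp
    qed
  qed
  moreover have "clone_gen term_clone \<subseteq> ccarrier term_clone" by (rule clone_gen_sub[OF term_clone_ca])
  ultimately show ?thesis unfolding minimal_clone_def by (auto simp: term_clone_def)
qed


theorem mainTheorem5:
  fixes D :: "('c, 't) clone_alg" and A :: "('a, 't) talg"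
  shows "(clone_algebra D \<and> minimal_clone D \<longrightarrow> clone_isomorphic (up (down D)) D) \<and>
         (\<forall>\<phi>. clone_congruence (term_clone :: ('t trm, 't) clone_alg) \<phi> \<longrightarrow>
              clone_isomorphic (up (down (clone_quot term_clone \<phi>))) (clone_quot term_clone \<phi>)) \<and>
         (t_algebra A \<longrightarrow> clone_isomorphic (up (down (up A))) (up A))"
proof (intro conjI allI impI)
  assume "clone_algebra D \<and> minimal_clone D"
  then show "clone_isomorphic (up (down D)) D" using min_iso by blast
next
  fix \<phi> assume C: "clone_congruence (term_clone :: ('t trm, 't) clone_alg) \<phi>"
  show "clone_isomorphic (up (down (clone_quot term_clone \<phi>))) (clone_quot term_clone \<phi>)"
    by (rule min_iso[OF quot_ca[OF term_clone_ca C] quot_min[OF term_clone_ca C term_clone_min]])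
next
  assume "t_algebra A"
  then show "clone_isomorphic (up (down (up A))) (up A)" by (rule min_iso[OF up_ca up_min])
qed

end
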